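(* Let $\boldsymbol{x}=[i,v]^{\intercal}$ be any solution of the switched system, and let $\boldsymbol{x}_p=[i_p,v_p]^{\intercal}$ be its unique $T$-periodic solution. Then the averages $\langle v\rangle$ and $\langle i\rangle$ exist, and $$\langle v\rangle=\tfrac12\bigl(v_p(0)+v_p(T/2)\bigr)=\frac{V_{dc}}{2},$$ $$\langle i\rangle=\frac{2C}{T}\bigl(V_{dc}-2v_p(0)\bigr),$$ and $$\Bigl|\langle i\rangle-\frac{V_{dc}}{2R}\Bigr|\le\frac{T}{2RC}\max_{t\in[0,T/2]}|i_p(t)| .$$
   Context: Let $R,L,C,V_{dc},T>0$. Let $\boldsymbol{x}(t)=[i(t),v(t)]^{\intercal}$. Define $$A_1=\begin{bmatrix}-\frac RL & -\frac1L\\ \frac1C & 0\end{bmatrix},\quad A_2=\begin{bmatrix}-\frac RL & \frac1L\\ -\frac1C & 0\end{bmatrix},\quad \boldsymbol{b}_1=\begin{bmatrix}\frac{V_{dc}}L\\ 0\end{bmatrix}.$$ The switched system on $t\ge0$ is: $\boldsymbol{x}'=A_1\boldsymbol{x}+\boldsymbol{b}_1$ on each interval $[(k-1)T,(k-1)T+\frac T2]$ and $\boldsymbol{x}'=A_2\boldsymbol{x}$ on each interval $[(k-1)T+\frac T2,kT]$, $k=1,2,\dots$; solutions are continuous functions on $[0,\infty)$. The system has a unique $T$-periodic solution $\boldsymbol{x}_p$, with $\boldsymbol{x}_p(0)=\left(I-\mathrm{e}^{\frac{T}{2}A_2}\mathrm{e}^{\frac{T}{2}A_1}\right)^{-1}\mathrm{e}^{\frac{T}{2}A_2}A_1^{-1}\left(\mathrm{e}^{\frac{T}{2}A_1}-I\right)\boldsymbol{b}_1$.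 For a function $f$ on $[0,\infty)$, its average is $\langle f\rangle=\lim_{\tau\to\infty}\frac1\tau\int_0^\tau f(t)\,dt$. *)

theory Defs
  imports "HOL-Analysis.Analysis"
begin

text \<open>State x = [i, v]: component 1 is the current i, component 2 the voltage v.\<close>

definition A1 :: "real \<Rightarrow> real \<Rightarrow> real \<Rightarrow> real^2^2" where
  "A1 R L C = vector [vector [- R / L, - 1 / L], vector [1 / C, 0]]"

definition A2 :: "real \<Rightarrow> real \<Rightarrow> real \<Rightarrow> real^2^2" where
  "A2 R L C = vector [vector [- R / L, 1 / L], vector [- 1 / C, 0]]"

definition b1 :: "real \<Rightarrow> real \<Rightarrow> real^2" where
  "b1 L Vdc = vector [Vdc / L, 0]"

definition is_switched_solution ::
  "real \<Rightarrow> real \<Rightarrow> real \<Rightarrow> real \<Rightarrow> real \<Rightarrow> (real \<Rightarrow> real^2) \<Rightarrow> bool" where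
  "is_switched_solution R L C Vdc T x \<longleftrightarrow>
     continuous_on {0..} x \<and>
     (\<forall>k::nat. \<forall>t\<in>{real k * T .. real k * T + T / 2}.
        (x has_vector_derivative (A1 R L C *v x t + b1 L Vdc))
          (at t within {real k * T .. real k * T + T / 2})) \<and>
     (\<forall>k::nat. \<forall>t\<in>{real k * T + T / 2 .. real (Suc k) * T}.
        (x has_vector_derivative (A2 R L C *v x t))
          (at t within {real k * T + T / 2 .. real (Suc k) * T}))"

definition has_average :: "(real \<Rightarrow> real) \<Rightarrow> real \<Rightarrow> bool" where
  "has_average f a \<longleftrightarrow>
     ((\<lambda>\<tau>. (1 / \<tau>) * integral {0..\<tau>} f) \<longlongrightarrow> a) at_top"

end

theory Submission
  imports Defs
begin


lemma comp_deriv: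
  assumes "(x has_vector_derivative D) F"
  shows "((\<lambda>t. x t $ i) has_real_derivative (D $ i)) F"
proof -
  have "((\<lambda>t. x t $ i) has_derivative (\<lambda>h. (h *\<^sub>R D) $ i)) F"
    using bounded_linear.has_derivative[OF bounded_linear_vec_nth assms[unfolded has_vector_derivative_def]] .
  moreover have "(\<lambda>h. h * D $ i) = (*) (D $ i)" by (auto simp: fun_eq_iff)
  ultimately show ?thesis by (simp add: has_field_derivative_def)
qed

lemma decr_interval:
  fixes g :: "real \<Rightarrow> real"
  assumes "p \<le> q" "\<And>t. t \<in> {p..q} \<Longrightarrow> (g has_real_derivative g' t) (at t within {p..q})"
    "\<And>t. t \<in> {p..q} \<Longrightarrow> g' t \<le> 0"
  shows "g q \<le> g p"
proof -
  obtain t where t: "t \<in> {p..q}" "g q - g p = g' t * (q - p)"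
    using mvt_very_simple[of p q g "\<lambda>t. (*) (g' t)"] assms(1,2) by (auto simp: has_field_derivative_def)
  moreover have "g' t * (q - p) \<le> 0" using assms(1) assms(3)[OF t(1)] by (simp add: mult_nonpos_nonneg)
  ultimately show ?thesis by linarith
qed

definition J :: "real \<Rightarrow> nat \<Rightarrow> real set" where
  "J T j = {real j * (T/2) .. real (Suc j) * (T/2)}"

lemma piecewise_mono:
  fixes g :: "real \<Rightarrow> real"
  assumes T: "T > 0" and ab: "0 \<le> a" "a \<le> b"
    and pw: "\<And>j s t. s \<in> J T j \<Longrightarrow> t \<in> J T j \<Longrightarrow> a \<le> s \<Longrightarrow> s \<le> t \<Longrightarrow> t \<le> b \<Longrightarrow> g t \<le> g s"
  shows "g b \<le> g a"
proof -
  have claim: "\<forall>t. a \<le> t \<longrightarrow> t \<le> b \<longrightarrow> t \<le> real n * (T/2) \<longrightarrow> g t \<le> g a" for n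
  proof (induction n)
    case 0
    then show ?case using ab by (metis antisym mult_zero_left of_nat_0 order.refl order.trans)
  next
    case (Suc n)
    show ?case
    proof (intro allI impI)
      fix t assume t: "a \<le> t" "t \<le> b" "t \<le> real (Suc n) * (T/2)"
      show "g t \<le> g a"
      proof (cases "t \<le> real n * (T/2)")
        case True then show ?thesis using Suc t by blast
      next
        case False
        define s where "s = max a (real n * (T/2))"
        have sJ: "s \<in> J T n" "t \<in> J T n" using False t by (auto simp: J_def s_def)
        have "g t \<le> g s" by (rule pw[OF sJ]) (use False t in \<open>auto simp: s_def\<close>)
        moreover have "g s \<le> g a"
        proof (cases "a \<le> real n * (T/2)")
          case True
          then have "s = real n * (T/2)" by (simp add: s_def)
          then show ?thesis using Suc True t False by auto
        next
          case False then show ?thesis by (simp add: s_def)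
        qed
        ultimately show ?thesis by linarith
      qed
    qed
  qed
  obtain n where n: "b / (T/2) \<le> real n" using real_arch_simple by blast
  have "b \<le> real n * (T/2)" using n T by (simp add: field_simps)
  then show ?thesis using claim[of n] ab by auto
qed

lemma pw_deriv_mono:
  fixes g :: "real \<Rightarrow> real"
  assumes T: "T > 0" and ab: "0 \<le> a" "a \<le> b"
    and d: "\<And>j t. t \<in> J T j \<Longrightarrow> (g has_real_derivative g' j t) (at t within J T j)"
    and nn: "\<And>j t. t \<in> J T j \<Longrightarrow> a \<le> t \<Longrightarrow> t \<le> b \<Longrightarrow> g' j t \<le> 0"
  shows "g b \<le> g a"
proof (rule piecewise_mono[OF T ab])
  fix j s t assume st: "s \<in> J T j" "t \<in> J T j" "a \<le> s" "s \<le> t" "t \<le> b"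
  have sub: "{s..t} \<subseteq> J T j" using st by (auto simp: J_def)
  show "g t \<le> g s"
  proof (rule decr_interval[OF st(4)])
    fix u assume u: "u \<in> {s..t}"
    then show "(g has_real_derivative g' j u) (at u within {s..t})"
      using DERIV_subset[OF d sub] sub by blast
    show "g' j u \<le> 0" using nn[of u j] u sub st by auto
  qed
qed



definition sg :: "nat \<Rightarrow> real" where "sg j = (if even j then 1 else -1)"

lemma sg_sq[simp]: "sg j * sg j = 1" and sg_abs[simp]: "\<bar>sg j\<bar> = 1"
  by (auto simp: sg_def)

definition hom :: "real \<Rightarrow> real \<Rightarrow> real \<Rightarrow> real \<Rightarrow> (real \<Rightarrow> real) \<Rightarrow> (real \<Rightarrow> real) \<Rightarrow> bool" where
  "hom R L C T i v \<longleftrightarrow> (\<forall>j. \<forall>t\<in>J T j.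
     (i has_real_derivative (- R / L * i t - sg j * v t / L)) (at t within J T j) \<and>
     (v has_real_derivative (sg j * i t / C)) (at t within J T j))"

context
  fixes R L C T :: real and i v :: "real \<Rightarrow> real"
  assumes pos: "R > 0" "L > 0" "C > 0" "T > 0"
    and h: "hom R L C T i v"
begin

definition En :: "real \<Rightarrow> real" where "En t = L * (i t)^2 / 2 + C * (v t)^2 / 2"

lemma di: "t \<in> J T j \<Longrightarrow> (i has_real_derivative (- R / L * i t - sg j * v t / L)) (at t within J T j)"
  using h by (auto simp: hom_def)
lemma dv: "t \<in> J T j \<Longrightarrow> (v has_real_derivative (sg j * i t / C)) (at t within J T j)"
  using h by (auto simp: hom_def)

lemma dE: "t \<in> J T j \<Longrightarrow> (En has_real_derivative (- R * (i t)^2)) (at t within J T j)"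
proof -
  assume t: "t \<in> J T j"
  have a: "((\<lambda>t. (i t)^2) has_real_derivative (of_nat 2 * ((- R / L * i t - sg j * v t / L) * i t ^ (2 - Suc 0)))) (at t within J T j)"
    by (rule DERIV_power[OF di[OF t]])
  have b: "((\<lambda>t. (v t)^2) has_real_derivative (of_nat 2 * ((sg j * i t / C) * v t ^ (2 - Suc 0)))) (at t within J T j)"
    by (rule DERIV_power[OF dv[OF t]])
  have c: "((\<lambda>t. L * (i t)^2 / 2 + C * (v t)^2 / 2) has_real_derivative
     (L * (of_nat 2 * ((- R / L * i t - sg j * v t / L) * i t ^ (2 - Suc 0))) / 2 + C * (of_nat 2 * ((sg j * i t / C) * v t ^ (2 - Suc 0))) / 2)) (at t within J T j)"
    by (intro DERIV_add DERIV_cdivide DERIV_cmult a b)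
  moreover have "L * (of_nat 2 * ((- R / L * i t - sg j * v t / L) * i t ^ (2 - Suc 0))) / 2 + C * (of_nat 2 * ((sg j * i t / C) * v t ^ (2 - Suc 0))) / 2
     = - R * (i t)^2" using pos by (simp add: field_simps power2_eq_square)
  ultimately show ?thesis by (simp add: En_def[abs_def])
qed

lemma E_mono: "0 \<le> a \<Longrightarrow> a \<le> b \<Longrightarrow> En b \<le> En a"
  by (rule pw_deriv_mono[OF pos(4), of a b En "\<lambda>j t. - R * (i t)^2"]) (use dE pos in auto)

lemma E_nonneg: "En t \<ge> 0"
  using pos by (simp add: En_def)

definition Bi where "Bi = 1 + 2 * En 0 / L"
definition Bv where "Bv = 1 + 2 * En 0 / C"
definition K where "K = (R * Bi + Bv) / L + 1"

lemma En_le: "0 \<le> t \<Longrightarrow> En t \<le> En 0"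
  using E_mono[of 0 t] by simp

lemma absq: "\<bar>x::real\<bar> \<le> 1 + x^2"
proof (cases "\<bar>x\<bar> \<le> 1")
  case True then show ?thesis by (smt (verit) zero_le_power2)
next
  case False
  have "\<bar>x\<bar> * 1 \<le> \<bar>x\<bar> * \<bar>x\<bar>" by (rule mult_left_mono) (use False in auto)
  then show ?thesis by (simp add: power2_eq_square abs_mult_self_eq)
qed

lemma i_bd: "0 \<le> t \<Longrightarrow> \<bar>i t\<bar> \<le> Bi"
proof -
  assume t: "0 \<le> t"
  have "0 \<le> C * (v t)^2" using pos by simp
  then have "L * (i t)^2 / 2 \<le> En 0" using En_le[OF t] unfolding En_def by linarith
  then have "(i t)^2 \<le> 2 * En 0 / L" using pos by (simp add: field_simps)
  then show ?thesis using absq[of "i t"] by (simp add: Bi_def)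
qed

lemma v_bd: "0 \<le> t \<Longrightarrow> \<bar>v t\<bar> \<le> Bv"
proof -
  assume t: "0 \<le> t"
  have "0 \<le> L * (i t)^2" using pos by simp
  then have "C * (v t)^2 / 2 \<le> En 0" using En_le[OF t] unfolding En_def by linarith
  then have "(v t)^2 \<le> 2 * En 0 / C" using pos by (simp add: field_simps)
  then show ?thesis using absq[of "v t"] by (simp add: Bv_def)
qed

lemma K_pos: "K > 0"
proof -
  have "Bi \<ge> 0" "Bv \<ge> 0" using i_bd[of 0] v_bd[of 0] by auto
  then have "0 \<le> (R * Bi + Bv) / L" using pos by simp
  then show ?thesis by (simp add: K_def)
qed

lemma di_bd: "0 \<le> t \<Longrightarrow> \<bar>- R / L * i t - sg j * v t / L\<bar> \<le> K - 1"
proof -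
  assume t: "0 \<le> t"
  have "\<bar>R * i t\<bar> \<le> R * Bi" using i_bd[OF t] pos by (simp add: abs_mult)
  moreover have "\<bar>sg j * v t\<bar> \<le> Bv" using v_bd[OF t] by (simp add: abs_mult)
  ultimately have "\<bar>R * i t + sg j * v t\<bar> \<le> R * Bi + Bv" by linarith
  moreover have "- R / L * i t - sg j * v t / L = - (R * i t + sg j * v t) / L" using pos by (simp add: field_simps)
  ultimately show ?thesis using pos by (simp add: K_def divide_right_mono)
qed

lemma i_lip: "0 \<le> a \<Longrightarrow> a \<le> b \<Longrightarrow> \<bar>i b - i a\<bar> \<le> K * (b - a)"
proof -
  assume ab: "0 \<le> a" "a \<le> b"
  have "(\<lambda>t. i t - K * t) b \<le> (\<lambda>t. i t - K * t) a"
  proof (rule pw_deriv_mono[OF pos(4) ab, where g'="\<lambda>j t. (- R / L * i t - sg j * v t / L) - K * 1"])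
    fix j t assume "t \<in> J T j"
    then show "((\<lambda>t. i t - K * t) has_real_derivative (- R / L * i t - sg j * v t / L) - K * 1) (at t within J T j)"
      by (intro DERIV_diff di DERIV_cmult DERIV_ident)
  next
    fix j t assume "t \<in> J T j" "a \<le> t" "t \<le> b"
    then show "(- R / L * i t - sg j * v t / L) - K * 1 \<le> 0" using di_bd[of t j] ab by auto
  qed
  moreover have "(\<lambda>t. - i t - K * t) b \<le> (\<lambda>t. - i t - K * t) a"
  proof (rule pw_deriv_mono[OF pos(4) ab, where g'="\<lambda>j t. - (- R / L * i t - sg j * v t / L) - K * 1"])
    fix j t assume "t \<in> J T j"
    then show "((\<lambda>t. - i t - K * t) has_real_derivative - (- R / L * i t - sg j * v t / L) - K * 1) (at t within J T j)"
      by (intro DERIV_diff DERIV_minus di DERIV_cmult DERIV_ident)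
  next
    fix j t assume "t \<in> J T j" "a \<le> t" "t \<le> b"
    then show "- (- R / L * i t - sg j * v t / L) - K * 1 \<le> 0" using di_bd[of t j] ab by auto
  qed
  ultimately show ?thesis by (simp add: algebra_simps abs_le_iff)
qed

definition Einf where "Einf = Inf (En ` {0..})"

lemma Einf_le: "0 \<le> t \<Longrightarrow> Einf \<le> En t"
  unfolding Einf_def by (rule cInf_lower) (auto intro!: bdd_belowI[of _ 0] E_nonneg)

lemma Einf_approx: "\<eta> > 0 \<Longrightarrow> \<exists>t1\<ge>0. En t1 < Einf + \<eta>"
proof -
  assume e: "\<eta> > 0"
  have "Inf (En ` {0..}) < Einf + \<eta>" using e by (simp add: Einf_def)
  then have "\<exists>x\<in>En ` {0..}. x < Einf + \<eta>"
    by (subst (asm) cInf_less_iff) (auto intro!: bdd_belowI[of _ 0] E_nonneg)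
  then show ?thesis by auto
qed

lemma i_small: "c > 0 \<Longrightarrow> \<exists>t1\<ge>0. \<forall>t\<ge>t1. \<bar>i t\<bar> \<le> 2 * c"
proof -
  assume c: "c > 0"
  define hh where "hh = c / K"
  have hh: "hh > 0" using c K_pos by (simp add: hh_def)
  have Khh: "K * hh = c" using K_pos by (simp add: hh_def)
  define \<eta> where "\<eta> = R * c^2 * hh"
  have eta: "\<eta> > 0" using pos c hh by (simp add: \<eta>_def)
  obtain t1 where t1: "t1 \<ge> 0" "En t1 < Einf + \<eta>" using Einf_approx[OF eta] by blast
  have "\<bar>i t0\<bar> \<le> 2 * c" if t0: "t0 \<ge> t1" for t0
  proof (rule ccontr)
    assume big: "\<not> \<bar>i t0\<bar> \<le> 2 * c"
    have ge: "c \<le> \<bar>i t\<bar>" if "t0 \<le> t" "t \<le> t0 + hh" for t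
    proof -
      have "\<bar>i t - i t0\<bar> \<le> K * (t - t0)" using i_lip[of t0 t] that t0 t1 by auto
      also have "\<dots> \<le> K * hh" using that K_pos by (intro mult_left_mono) auto
      finally show ?thesis using big Khh by linarith
    qed
    have "(\<lambda>t. En t + R * c^2 * t) (t0 + hh) \<le> (\<lambda>t. En t + R * c^2 * t) t0"
    proof (rule pw_deriv_mono[OF pos(4), where g="\<lambda>t. En t + R * c^2 * t" and a=t0 and b="t0+hh" and g'="\<lambda>j t. - R * (i t)^2 + R * c^2 * 1"])
      show "0 \<le> t0" "t0 \<le> t0 + hh" using t0 t1 hh by auto
    next
      fix j t assume "t \<in> J T j"
      then show "((\<lambda>t. En t + R * c^2 * t) has_real_derivative - R * (i t)^2 + R * c^2 * 1) (at t within J T j)"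
        by (intro DERIV_add dE DERIV_cmult DERIV_ident)
    next
      fix j t assume "t \<in> J T j" "t0 \<le> t" "t \<le> t0 + hh"
      then have "c \<le> \<bar>i t\<bar>" using ge by auto
      then have "c^2 \<le> \<bar>i t\<bar>^2" using c by (intro power_mono) auto
      then have "R * c^2 \<le> R * (i t)^2" using pos by simp
      then show "- R * (i t)^2 + R * c^2 * 1 \<le> 0" by simp
    qed
    then have "En (t0 + hh) \<le> En t0 - \<eta>" by (simp add: \<eta>_def algebra_simps)
    moreover have "En t0 \<le> En t1" using E_mono[of t1 t0] t0 t1 by auto
    moreover have "Einf \<le> En (t0 + hh)" using Einf_le[of "t0 + hh"] t0 t1 hh by auto
    ultimately show False using t1 by linarith
  qed
  then show ?thesis using t1 by blast
qed

lemma v_lip: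
  assumes "\<forall>t\<ge>t2. \<bar>i t\<bar> \<le> e" "0 \<le> t2" "t2 \<le> a" "a \<le> b"
  shows "\<bar>v b - v a\<bar> \<le> e / C * (b - a)"
proof -
  have ab: "0 \<le> a" "a \<le> b" using assms by auto
  have bd: "\<bar>sg j * i t / C\<bar> \<le> e / C" if "a \<le> t" for j t
    using assms(1) that assms(3) pos by (auto simp: abs_mult abs_divide divide_right_mono)
  have "(\<lambda>t. v t - e / C * t) b \<le> (\<lambda>t. v t - e / C * t) a"
  proof (rule pw_deriv_mono[OF pos(4) ab, where g="\<lambda>t. v t - e / C * t" and g'="\<lambda>j t. sg j * i t / C - e / C * 1"])
    fix j t assume "t \<in> J T j"
    then show "((\<lambda>t. v t - e / C * t) has_real_derivative sg j * i t / C - e / C * 1) (at t within J T j)"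
      by (intro DERIV_diff dv DERIV_cmult DERIV_ident)
  next
    fix j t assume "t \<in> J T j" "a \<le> t" "t \<le> b"
    then show "sg j * i t / C - e / C * 1 \<le> 0" using bd[of t j, unfolded abs_le_iff] by linarith
  qed
  moreover have "(\<lambda>t. - v t - e / C * t) b \<le> (\<lambda>t. - v t - e / C * t) a"
  proof (rule pw_deriv_mono[OF pos(4) ab, where g="\<lambda>t. - v t - e / C * t" and g'="\<lambda>j t. - (sg j * i t / C) - e / C * 1"])
    fix j t assume "t \<in> J T j"
    then show "((\<lambda>t. - v t - e / C * t) has_real_derivative - (sg j * i t / C) - e / C * 1) (at t within J T j)"
      by (intro DERIV_diff DERIV_minus dv DERIV_cmult DERIV_ident)
  next
    fix j t assume "t \<in> J T j" "a \<le> t" "t \<le> b"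
    then show "- (sg j * i t / C) - e / C * 1 \<le> 0" using bd[of t j, unfolded abs_le_iff] by linarith
  qed
  ultimately show ?thesis by (simp add: algebra_simps abs_le_iff diff_divide_distrib)
qed

lemma v_small: "c > 0 \<Longrightarrow> \<exists>t2\<ge>0. \<forall>t\<ge>t2. \<bar>v t\<bar> \<le> 3 * c"
proof -
  assume c: "c > 0"
  define e where "e = min (c * C / T) (min (c / R) (c * T / (8 * L)))"
  have e: "e > 0" using c pos by (simp add: e_def)
  have e1: "e / C * T \<le> c"
  proof -
    have "e \<le> c * C / T" by (simp add: e_def)
    then have "e * T \<le> c * C" using pos by (simp add: pos_le_divide_eq)
    then show ?thesis using pos by (simp add: field_simps)
  qed
  have e2: "R * e \<le> c"
  proof -
    have "e \<le> c / R" by (simp add: e_def)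
    then show ?thesis using pos by (simp add: pos_le_divide_eq mult.commute)
  qed
  have e3: "2 * e < c * T / (2 * L)"
  proof -
    have "e \<le> c * T / (8 * L)" by (simp add: e_def)
    moreover have "c * T / (8 * L) * 2 < c * T / (2 * L)" using c pos by (simp add: field_simps)
    ultimately show ?thesis by linarith
  qed
  obtain t2 where t2: "t2 \<ge> 0" "\<forall>t\<ge>t2. \<bar>i t\<bar> \<le> e" using i_small[of "e/2"] e by auto
  have "\<bar>v t0\<bar> \<le> 3 * c" if t0: "t0 \<ge> t2" for t0
  proof (rule ccontr)
    assume big: "\<not> \<bar>v t0\<bar> \<le> 3 * c"
    define \<sigma> where "\<sigma> = (if v t0 > 0 then 1 else -1 :: real)"
    have sv0: "\<sigma> * v t0 = \<bar>v t0\<bar>" by (simp add: \<sigma>_def)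
    have sabs: "\<bar>\<sigma>\<bar> = 1" by (simp add: \<sigma>_def)
    have sv: "\<sigma> * v t \<ge> 2 * c" if "t0 \<le> t" "t \<le> t0 + T" for t
    proof -
      have "\<bar>v t - v t0\<bar> \<le> e / C * (t - t0)" by (rule v_lip[OF t2(2,1) t0 that(1)])
      also have "\<dots> \<le> e / C * T" using that e pos by (intro mult_left_mono) auto
      finally have "\<bar>v t - v t0\<bar> \<le> c" using e1 by linarith
      then have "\<bar>\<sigma> * v t - \<sigma> * v t0\<bar> \<le> c" using sabs by (simp add: abs_mult right_diff_distrib[symmetric])
      then show ?thesis using sv0 big by linarith
    qed
    define j where "j = nat \<lceil>t0 / (T/2)\<rceil>"
    define p where "p = real j * (T/2)"
    define q where "q = real (Suc j) * (T/2)"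
    have t0nn: "0 \<le> t0" using t0 t2 by auto
    have "real j = real_of_int \<lceil>t0 / (T/2)\<rceil>" using t0nn pos by (simp add: j_def)
    then have jb: "t0 / (T/2) \<le> real j" "real j < t0 / (T/2) + 1" by linarith+
    have p1: "t0 \<le> p" using jb(1) pos by (simp add: p_def field_simps)
    have p2: "p < t0 + T/2" using jb(2) pos by (simp add: p_def field_simps)
    have qp: "q = p + T/2" by (simp add: p_def q_def algebra_simps)
    have Jpq: "J T j = {p..q}" by (simp add: J_def p_def q_def)
    define D where "D = sg j * \<sigma>"
    have Dabs: "\<bar>D\<bar> = 1" using sabs by (simp add: D_def abs_mult)
    have "(\<lambda>t. D * i t + c / L * t) q \<le> (\<lambda>t. D * i t + c / L * t) p"
    proof (rule decr_interval[where g="\<lambda>t. D * i t + c / L * t" and g'="\<lambda>t. D * (- R / L * i t - sg j * v t / L) + c / L * 1"])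
      show "p \<le> q" using qp pos by simp
    next
      fix t assume "t \<in> {p..q}"
      then show "((\<lambda>t. D * i t + c / L * t) has_real_derivative D * (- R / L * i t - sg j * v t / L) + c / L * 1) (at t within {p..q})"
        using di[of t j] Jpq by (intro DERIV_add DERIV_cmult DERIV_ident) auto
    next
      fix t assume tpq: "t \<in> {p..q}"
      have a1: "D * (- R / L * i t - sg j * v t / L) = - (R * (D * i t) + \<sigma> * v t) / L"
        using pos by (simp add: D_def field_simps sg_def)
      have "\<bar>D * i t\<bar> \<le> e" using t2 tpq p1 t0 Dabs by (simp add: abs_mult)
      then have "- e \<le> D * i t" by (simp add: abs_le_iff)
      then have "R * (- e) \<le> R * (D * i t)" using pos by (intro mult_left_mono) auto
      then have "R * (D * i t) \<ge> - c" using e2 by simp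
      moreover have "\<sigma> * v t \<ge> 2 * c" using sv tpq p1 p2 qp by auto
      ultimately have "R * (D * i t) + \<sigma> * v t \<ge> c" by linarith
      then have "- (R * (D * i t) + \<sigma> * v t) \<le> - c" by linarith
      then have "- (R * (D * i t) + \<sigma> * v t) / L \<le> - c / L" by (rule divide_right_mono) (use pos in auto)
      then show "D * (- R / L * i t - sg j * v t / L) + c / L * 1 \<le> 0" using a1 by simp
    qed
    then have "D * (i p - i q) \<ge> c / L * (q - p)" by (simp add: algebra_simps diff_divide_distrib)
    then have "D * (i p - i q) \<ge> c * T / (2 * L)" using qp by simp
    moreover have "\<bar>D * (i p - i q)\<bar> \<le> 2 * e"
    proof -
      have "\<bar>i p\<bar> \<le> e" "\<bar>i q\<bar> \<le> e" using t2 p1 t0 qp pos by auto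
      then show ?thesis using Dabs by (simp add: abs_mult)
    qed
    ultimately show False using e3 by linarith
  qed
  then show ?thesis using t2 by blast
qed

end



lemma A1_1: "(A1 R L C *v z) $ 1 = - R / L * z $ 1 - 1 * z $ 2 / L"
  and A1_2: "(A1 R L C *v z) $ 2 = 1 * z $ 1 / C"
  and A2_1: "(A2 R L C *v z) $ 1 = - R / L * z $ 1 - (-1) * z $ 2 / L"
  and A2_2: "(A2 R L C *v z) $ 2 = (-1) * z $ 1 / C"
  and b1_1: "b1 L Vdc $ 1 = Vdc / L" and b1_2: "b1 L Vdc $ 2 = 0"
  by (simp_all add: A1_def A2_def b1_def matrix_vector_mult_def sum_2)

lemma J_even: "J T (2 * k) = {real k * T .. real k * T + T / 2}"
  by (simp add: J_def algebra_simps)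
lemma J_odd: "J T (2 * k + 1) = {real k * T + T / 2 .. real (Suc k) * T}"
  by (simp add: J_def algebra_simps)


lemma sw_deriv:
  assumes sol: "is_switched_solution R L C Vdc T x" and t: "t \<in> J T j"
  shows "((\<lambda>t. x t $ 1) has_real_derivative (- R / L * x t $ 1 - sg j * x t $ 2 / L + (if even j then Vdc / L else 0))) (at t within J T j)"
    and "((\<lambda>t. x t $ 2) has_real_derivative (sg j * x t $ 1 / C)) (at t within J T j)"
proof -
  have conj: "((\<lambda>t. x t $ 1) has_real_derivative (- R / L * x t $ 1 - sg j * x t $ 2 / L + (if even j then Vdc / L else 0))) (at t within J T j)
    \<and> ((\<lambda>t. x t $ 2) has_real_derivative (sg j * x t $ 1 / C)) (at t within J T j)"
  proof (cases "even j")
    case True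
    then obtain k where k: "j = 2 * k" by (rule evenE)
    have "(x has_vector_derivative (A1 R L C *v x t + b1 L Vdc)) (at t within J T j)"
    proof -
      have H: "\<forall>k::nat. \<forall>t\<in>{real k * T .. real k * T + T / 2}.
        (x has_vector_derivative (A1 R L C *v x t + b1 L Vdc)) (at t within {real k * T .. real k * T + T / 2})"
        by (rule conjunct1[OF conjunct2[OF sol[unfolded is_switched_solution_def]]])
      have "t \<in> {real k * T .. real k * T + T / 2}" using t unfolding k J_even .
      from H[rule_format, OF this] show ?thesis unfolding k J_even .
    qed
    note d = comp_deriv[OF this, of 1] comp_deriv[OF this, of 2]
    have sgj: "sg j = 1" using True by (simp add: sg_def)
    have e1: "(A1 R L C *v x t + b1 L Vdc) $ 1 = - R / L * x t $ 1 - sg j * x t $ 2 / L + (if even j then Vdc / L else 0)"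
      unfolding vector_add_component A1_1 b1_1 sgj using True by simp
    have e2: "(A1 R L C *v x t + b1 L Vdc) $ 2 = sg j * x t $ 1 / C"
      unfolding vector_add_component A1_2 b1_2 sgj by simp
    show ?thesis using d unfolding e1 e2 by simp
  next
    case False
    then obtain k where k: "j = 2 * k + 1" by (rule oddE)
    have "(x has_vector_derivative (A2 R L C *v x t)) (at t within J T j)"
    proof -
      have H: "\<forall>k::nat. \<forall>t\<in>{real k * T + T / 2 .. real (Suc k) * T}.
        (x has_vector_derivative (A2 R L C *v x t)) (at t within {real k * T + T / 2 .. real (Suc k) * T})"
        by (rule conjunct2[OF conjunct2[OF sol[unfolded is_switched_solution_def]]])
      have "t \<in> {real k * T + T / 2 .. real (Suc k) * T}" using t unfolding k J_odd .
      from H[rule_format, OF this] show ?thesis unfolding k J_odd .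
    qed
    note d = comp_deriv[OF this, of 1] comp_deriv[OF this, of 2]
    have sgj: "sg j = -1" using False by (simp add: sg_def)
    have e1: "(A2 R L C *v x t) $ 1 = - R / L * x t $ 1 - sg j * x t $ 2 / L + (if even j then Vdc / L else 0)"
      unfolding A2_1 sgj using False by simp
    have e2: "(A2 R L C *v x t) $ 2 = sg j * x t $ 1 / C"
      unfolding A2_2 sgj by simp
    show ?thesis using d unfolding e1 e2 by simp
  qed
  show "((\<lambda>t. x t $ 1) has_real_derivative (- R / L * x t $ 1 - sg j * x t $ 2 / L + (if even j then Vdc / L else 0))) (at t within J T j)"
    using conj by (rule conjunct1)
  show "((\<lambda>t. x t $ 2) has_real_derivative (sg j * x t $ 1 / C)) (at t within J T j)"
    using conj by (rule conjunct2)
qed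



lemma hom_diff:
  assumes LC: "L > 0" "C > 0" and "is_switched_solution R L C Vdc T x" "is_switched_solution R L C Vdc T y"
  shows "hom R L C T (\<lambda>t. x t $ 1 - y t $ 1) (\<lambda>t. x t $ 2 - y t $ 2)"
  unfolding hom_def
proof (intro allI ballI conjI)
  fix j t assume t: "t \<in> J T j"
  show "((\<lambda>t. x t $ 1 - y t $ 1) has_real_derivative - R / L * (x t $ 1 - y t $ 1) - sg j * (x t $ 2 - y t $ 2) / L) (at t within J T j)"
    by (rule DERIV_cong[OF DERIV_diff[OF sw_deriv(1)[OF assms(3) t] sw_deriv(1)[OF assms(4) t]]])
       (use LC in \<open>simp add: field_simps\<close>)
  show "((\<lambda>t. x t $ 2 - y t $ 2) has_real_derivative sg j * (x t $ 1 - y t $ 1) / C) (at t within J T j)"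
    by (rule DERIV_cong[OF DERIV_diff[OF sw_deriv(2)[OF assms(3) t] sw_deriv(2)[OF assms(4) t]]])
       (use LC in \<open>simp add: field_simps\<close>)
qed

lemma shift_deriv:
  assumes "\<And>s. s \<in> J T (Suc j) \<Longrightarrow> (f has_real_derivative f' s) (at s within J T (Suc j))" "t \<in> J T j"
  shows "((\<lambda>t. f (t + T/2)) has_real_derivative f' (t + T/2)) (at t within J T j)"
proof -
  have e1: "real j * (T/2) + T/2 = real (Suc j) * (T/2)" "real (Suc j) * (T/2) + T/2 = real (Suc (Suc j)) * (T/2)"
    by (simp_all add: algebra_simps add_divide_distrib)
  have im: "(\<lambda>t. t + T/2) ` J T j = J T (Suc j)" unfolding J_def image_add_atLeastAtMost' e1 ..
  have "t + T/2 \<in> J T (Suc j)" using assms(2) by (auto simp: J_def algebra_simps)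
  then have "(f has_real_derivative f' (t + T/2)) (at ((\<lambda>t. t + T/2) t) within (\<lambda>t. t + T/2) ` J T j)"
    using assms(1) im by auto
  moreover have "((\<lambda>t. t + T/2) has_real_derivative 1) (at t within J T j)"
    by (intro derivative_eq_intros) auto
  ultimately have "(f \<circ> (\<lambda>t. t + T/2) has_real_derivative f' (t + T/2) * 1) (at t within J T j)"
    by (rule DERIV_image_chain[where g="\<lambda>t. t + T/2" and x=t and s="J T j" and f=f])
  then show ?thesis by (simp add: o_def)
qed

lemma hom_sym:
  assumes LC: "L > 0" "C > 0" and sol: "is_switched_solution R L C Vdc T x"
  shows "hom R L C T (\<lambda>t. x t $ 1 - x (t + T/2) $ 1) (\<lambda>t. x t $ 2 + x (t + T/2) $ 2 - Vdc)"
  unfolding hom_def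
proof (intro allI ballI conjI)
  fix j t assume t: "t \<in> J T j"
  have s: "sg (Suc j) = - sg j" by (simp add: sg_def)
  have d1: "((\<lambda>t. x (t + T/2) $ 1) has_real_derivative (- R / L * x (t + T/2) $ 1 - sg (Suc j) * x (t + T/2) $ 2 / L + (if even (Suc j) then Vdc / L else 0))) (at t within J T j)"
    by (rule shift_deriv[OF _ t, where f="\<lambda>t. x t $ 1"]) (rule sw_deriv(1)[OF sol])
  have d2: "((\<lambda>t. x (t + T/2) $ 2) has_real_derivative (sg (Suc j) * x (t + T/2) $ 1 / C)) (at t within J T j)"
    by (rule shift_deriv[OF _ t, where f="\<lambda>t. x t $ 2"]) (rule sw_deriv(2)[OF sol])
  show "((\<lambda>t. x t $ 1 - x (t + T/2) $ 1) has_real_derivative - R / L * (x t $ 1 - x (t + T/2) $ 1) - sg j * (x t $ 2 + x (t + T/2) $ 2 - Vdc) / L) (at t within J T j)"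
    by (rule DERIV_cong[OF DERIV_diff[OF sw_deriv(1)[OF sol t] d1]])
       (use LC in \<open>auto simp: field_simps sg_def\<close>)
  show "((\<lambda>t. x t $ 2 + x (t + T/2) $ 2 - Vdc) has_real_derivative sg j * (x t $ 1 - x (t + T/2) $ 1) / C) (at t within J T j)"
    by (rule DERIV_cong[OF DERIV_diff[OF DERIV_add[OF sw_deriv(2)[OF sol t] d2] DERIV_const]])
       (use LC in \<open>auto simp: field_simps sg_def\<close>)
qed



lemma int_cont: "continuous_on {0..} f \<Longrightarrow> 0 \<le> a \<Longrightarrow> (f::real\<Rightarrow>real) integrable_on {a..b}"
  by (rule integrable_continuous_real) (auto intro: continuous_on_subset)

lemma lim_by_bound:
  fixes h :: "real \<Rightarrow> real"
  assumes "\<forall>\<tau>\<ge>N. \<bar>h \<tau> - a\<bar> \<le> KK / \<tau>"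
  shows "(h \<longlongrightarrow> a) at_top"
  unfolding tendsto_iff eventually_at_top_linorder dist_real_def
proof (intro allI impI)
  fix e :: real assume e: "e > 0"
  show "\<exists>N0. \<forall>\<tau>\<ge>N0. \<bar>h \<tau> - a\<bar> < e"
  proof (intro exI allI impI)
    fix \<tau> assume "\<tau> \<ge> max N (max 1 (KK / e + 1))"
    then have t: "\<tau> \<ge> N" "\<tau> > 0" "\<tau> > KK / e" by auto
    have "KK < e * \<tau>" using t(3) e by (simp add: pos_divide_less_eq mult.commute)
    then have "KK / \<tau> < e" using t(2) by (simp add: pos_divide_less_eq)
    then show "\<bar>h \<tau> - a\<bar> < e" using assms t(1) by force
  qed
qed

lemma avg_perturb:
  fixes f g :: "real \<Rightarrow> real"
  assumes av: "has_average f a" and cf: "continuous_on {0..} f" and cg: "continuous_on {0..} g"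
    and small: "\<And>e. e > 0 \<Longrightarrow> \<exists>t0. \<forall>t\<ge>t0. \<bar>g t\<bar> \<le> e"
  shows "has_average (\<lambda>t. f t + g t) a"
proof -
  have g0: "((\<lambda>\<tau>. (1 / \<tau>) * integral {0..\<tau>} g) \<longlongrightarrow> 0) at_top"
    unfolding tendsto_iff eventually_at_top_linorder dist_real_def
  proof (intro allI impI)
    fix e :: real assume e: "e > 0"
    obtain t0' where t0': "\<forall>t\<ge>t0'. \<bar>g t\<bar> \<le> e / 2" using small[of "e/2"] e by auto
    define t0 where "t0 = max 0 t0'"
    have t0: "t0 \<ge> 0" "\<forall>t\<ge>t0. \<bar>g t\<bar> \<le> e / 2" using t0' by (auto simp: t0_def)
    define M where "M = \<bar>integral {0..t0} g\<bar>"
    show "\<exists>N0. \<forall>\<tau>\<ge>N0. \<bar>1 / \<tau> * integral {0..\<tau>} g - 0\<bar> < e"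
    proof (intro exI allI impI)
      fix \<tau> assume "\<tau> \<ge> max t0 (max 1 (2 * M / e + 1))"
      then have t: "\<tau> \<ge> t0" "\<tau> > 0" "\<tau> > 2 * M / e" by auto
      have split: "integral {0..\<tau>} g = integral {0..t0} g + integral {t0..\<tau>} g"
        using Henstock_Kurzweil_Integration.integral_combine[where a=0 and c=t0 and b=\<tau> and f=g] int_cont[OF cg, where a=0 and b=\<tau>] t t0 by auto
      have cc: "continuous_on {t0..\<tau>} g" by (rule continuous_on_subset[OF cg]) (use t0 in auto)
      have "\<bar>integral {t0..\<tau>} g\<bar> \<le> e / 2 * (\<tau> - t0)"
        using integral_bound[where a=t0 and b=\<tau> and f=g and B="e/2", OF _ cc] t t0 by auto
      also have "\<dots> \<le> e / 2 * \<tau>" using e t0 by (intro mult_left_mono) auto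
      finally have "\<bar>integral {0..\<tau>} g\<bar> \<le> M + e / 2 * \<tau>" unfolding split M_def by linarith
      moreover have "M < e / 2 * \<tau>" using t(3) e by (simp add: field_simps)
      ultimately have "\<bar>integral {0..\<tau>} g\<bar> < e * \<tau>" by linarith
      then show "\<bar>1 / \<tau> * integral {0..\<tau>} g - 0\<bar> < e" using t(2)
        by (simp add: abs_div pos_divide_less_eq)
    qed
  qed
  have "((\<lambda>\<tau>. (1 / \<tau>) * integral {0..\<tau>} f + (1 / \<tau>) * integral {0..\<tau>} g) \<longlongrightarrow> a + 0) at_top"
    using av g0 unfolding has_average_def by (intro tendsto_add)
  then have "((\<lambda>\<tau>. (1 / \<tau>) * integral {0..\<tau>} f + (1 / \<tau>) * integral {0..\<tau>} g) \<longlongrightarrow> a) at_top" by simp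
  then show ?thesis unfolding has_average_def
  proof (rule Lim_transform_eventually)
    show "\<forall>\<^sub>F \<tau> in at_top. 1 / \<tau> * integral {0..\<tau>} f + 1 / \<tau> * integral {0..\<tau>} g = 1 / \<tau> * integral {0..\<tau>} (\<lambda>t. f t + g t)"
      unfolding eventually_at_top_linorder
    proof (intro exI allI impI)
      fix \<tau> :: real assume "\<tau> \<ge> 0"
      then show "1 / \<tau> * integral {0..\<tau>} f + 1 / \<tau> * integral {0..\<tau>} g = 1 / \<tau> * integral {0..\<tau>} (\<lambda>t. f t + g t)"
        using integral_add[OF int_cont[OF cf, where a=0 and b=\<tau>] int_cont[OF cg, where a=0 and b=\<tau>]] by (simp add: distrib_left)
    qed
  qed
qed

lemma avg_periodic:
  fixes f :: "real \<Rightarrow> real"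
  assumes T: "T > 0" and cf: "continuous_on {0..} f" and per: "\<forall>t\<ge>0. f (t + T) = f t"
  shows "has_average f (integral {0..T} f / T)"
proof -
  define P where "P = integral {0..T} f"
  have pern: "f (t + real n * T) = f t" if "t \<ge> 0" for n t
  proof (induction n)
    case 0 then show ?case by simp
  next
    case (Suc n)
    have "f (t + real (Suc n) * T) = f ((t + real n * T) + T)" by (simp add: algebra_simps)
    also have "\<dots> = f (t + real n * T)" using per that T by simp
    finally show ?case using Suc by simp
  qed
  have shiftint: "integral {real n * T .. real n * T + s} f = integral {0..s} f" for n s
  proof -
    have "integral {0..s} (f \<circ> (+) (real n * T)) = integral {0 + real n * T .. s + real n * T} f"
      by (rule integral_shift_Icc_real)
    moreover have "integral {0..s} (f \<circ> (+) (real n * T)) = integral {0..s} f"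
      by (rule integral_cong) (simp add: pern add.commute)
    ultimately show ?thesis by (simp add: add.commute)
  qed
  have Fn: "integral {0 .. real n * T} f = real n * P" for n
  proof (induction n)
    case 0 then show ?case by simp
  next
    case (Suc n)
    have e: "real (Suc n) * T = real n * T + T" by (simp add: algebra_simps)
    have "integral {0 .. real (Suc n) * T} f = integral {0 .. real n * T} f + integral {real n * T .. real n * T + T} f"
      unfolding e using Henstock_Kurzweil_Integration.integral_combine[where a=0 and c="real n * T" and b="real n * T + T" and f=f]
        int_cont[OF cf, where a=0 and b="real n * T + T"] T by auto
    then show ?case using Suc shiftint[of n T] by (simp add: P_def algebra_simps)
  qed
  have "bounded (f ` {0..T})"
    by (rule compact_imp_bounded, rule compact_continuous_image) (auto intro: continuous_on_subset[OF cf])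
  then obtain B where B: "\<forall>t\<in>{0..T}. \<bar>f t\<bar> \<le> B" unfolding bounded_real by auto
  have B0: "B \<ge> 0" using B T by force
  have rb: "\<bar>integral {0..s} f\<bar> \<le> B * T" if "0 \<le> s" "s \<le> T" for s
  proof -
    have "continuous_on {0..s} f" by (rule continuous_on_subset[OF cf]) auto
    then have "\<bar>integral {0..s} f\<bar> \<le> B * (s - 0)" using integral_bound[where a=0 and b=s and f=f and B=B] that B by auto
    also have "\<dots> \<le> B * T" using B0 that by (intro mult_left_mono) auto
    finally show ?thesis .
  qed
  have "\<forall>\<tau>\<ge>T. \<bar>1 / \<tau> * integral {0..\<tau>} f - P / T\<bar> \<le> (B * T + \<bar>P\<bar>) / \<tau>"
  proof (intro allI impI)
    fix \<tau> assume tT: "\<tau> \<ge> T"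
    define n where "n = nat \<lfloor>\<tau> / T\<rfloor>"
    have "real n = real_of_int \<lfloor>\<tau> / T\<rfloor>" using tT T by (simp add: n_def)
    then have nb: "real n \<le> \<tau> / T" "\<tau> / T < real n + 1" by linarith+
    define s where "s = \<tau> - real n * T"
    have s: "0 \<le> s" "s \<le> T" using nb T by (auto simp: s_def field_simps)
    have tau: "\<tau> = real n * T + s" by (simp add: s_def)
    have "integral {0..\<tau>} f = integral {0 .. real n * T} f + integral {real n * T .. real n * T + s} f"
      unfolding tau using Henstock_Kurzweil_Integration.integral_combine[where a=0 and c="real n * T" and b="real n * T + s" and f=f]
        int_cont[OF cf, where a=0 and b="real n * T + s"] T s by auto
    then have F: "integral {0..\<tau>} f = real n * P + integral {0..s} f" using Fn shiftint by simp
    define r where "r = integral {0..s} f"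
    have r: "\<bar>r\<bar> \<le> B * T" using rb[OF s] by (simp add: r_def)
    have tpos: "\<tau> > 0" using tT T by simp
    have eq: "1 / \<tau> * integral {0..\<tau>} f - P / T = (r - P * s / T) / \<tau>"
      unfolding F r_def[symmetric] using tpos T by (simp add: tau field_simps)
    have "\<bar>P * s / T\<bar> \<le> \<bar>P\<bar>"
    proof -
      have "\<bar>P * s / T\<bar> = \<bar>P\<bar> * (s / T)" using s T by (simp add: abs_mult)
      also have "\<dots> \<le> \<bar>P\<bar> * 1" using s T by (intro mult_left_mono) auto
      finally show ?thesis by simp
    qed
    then have "\<bar>r - P * s / T\<bar> \<le> B * T + \<bar>P\<bar>" using r by linarith
    then show "\<bar>1 / \<tau> * integral {0..\<tau>} f - P / T\<bar> \<le> (B * T + \<bar>P\<bar>) / \<tau>"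
      unfolding eq using tpos by (simp add: abs_div divide_right_mono)
  qed
  from lim_by_bound[OF this] show ?thesis unfolding has_average_def P_def .
qed



lemma decay:
  assumes "R > 0" "L > 0" "C > 0" "T > 0" "hom R L C T i v" "e > 0"
  shows "\<exists>t0. \<forall>t\<ge>t0. \<bar>i t\<bar> \<le> e \<and> \<bar>v t\<bar> \<le> e"
proof -
  obtain t1 where t1: "\<forall>t\<ge>t1. \<bar>i t\<bar> \<le> 2 * (e/2)" using i_small[OF assms(1-5), of "e/2"] assms(6) by auto
  obtain t2 where t2: "\<forall>t\<ge>t2. \<bar>v t\<bar> \<le> 3 * (e/3)" using v_small[OF assms(1-5), of "e/3"] assms(6) by auto
  show ?thesis using t1 t2 by (intro exI[of _ "max t1 t2"]) auto
qed

lemma periodic_zero: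
  fixes g :: "real \<Rightarrow> real"
  assumes T: "T > 0" and per: "\<forall>t\<ge>0. g (t + T) = g t"
    and small: "\<And>e. e > 0 \<Longrightarrow> \<exists>t0. \<forall>t\<ge>t0. \<bar>g t\<bar> \<le> e" and t: "t \<ge> 0"
  shows "g t = 0"
proof -
  have pern: "g (t + real n * T) = g t" for n
  proof (induction n)
    case 0 then show ?case by simp
  next
    case (Suc n)
    have "g (t + real (Suc n) * T) = g ((t + real n * T) + T)" by (simp add: algebra_simps)
    also have "\<dots> = g (t + real n * T)" using per t T by simp
    finally show ?case using Suc by simp
  qed
  have "\<bar>g t\<bar> \<le> e" if e: "e > 0" for e
  proof -
    obtain t0 where t0: "\<forall>t\<ge>t0. \<bar>g t\<bar> \<le> e" using small[OF e] by auto
    obtain n where n: "t0 / T \<le> real n" using real_arch_simple by blast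
    have "t0 \<le> real n * T" using n T by (simp add: field_simps)
    then have "t0 \<le> t + real n * T" using t by linarith
    then show ?thesis using t0 pern[of n] by auto
  qed
  then have "\<bar>g t\<bar> \<le> 0" using field_le_epsilon[of "\<bar>g t\<bar>" 0] by auto
  then show ?thesis by simp
qed

lemma J0: "J T 0 = {0..T/2}" by (simp add: J_def)

lemma ftc_v:
  assumes sol: "is_switched_solution R L C Vdc T x" and T: "T > 0"
  shows "((\<lambda>t. sg 0 * x t $ 1 / C) has_integral (x (T/2) $ 2 - x 0 $ 2)) {0..T/2}"
proof -
  have "((\<lambda>t. x t $ 2) has_vector_derivative (sg 0 * x t $ 1 / C)) (at t within {0..T/2})" if "t \<in> {0..T/2}" for t
    using sw_deriv(2)[OF sol, of t 0] that unfolding J0 has_real_derivative_iff_has_vector_derivative by auto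
  from fundamental_theorem_of_calculus[OF _ this] T show ?thesis by auto
qed

lemma ftc_i:
  assumes sol: "is_switched_solution R L C Vdc T x" and T: "T > 0"
  shows "((\<lambda>t. - R / L * x t $ 1 - sg 0 * x t $ 2 / L + (if even (0::nat) then Vdc / L else 0)) has_integral (x (T/2) $ 1 - x 0 $ 1)) {0..T/2}"
proof -
  have "((\<lambda>t. x t $ 1) has_vector_derivative (- R / L * x t $ 1 - sg 0 * x t $ 2 / L + (if even (0::nat) then Vdc / L else 0))) (at t within {0..T/2})" if "t \<in> {0..T/2}" for t
    using sw_deriv(1)[OF sol, of t 0] that unfolding J0 has_real_derivative_iff_has_vector_derivative by auto
  from fundamental_theorem_of_calculus[OF _ this] T show ?thesis by auto
qed



lemma mid_aux:
  fixes p q r c d :: real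
  assumes "\<bar>q - p\<bar> \<le> c" "\<bar>r - q\<bar> \<le> d"
  shows "\<bar>(p - q + (r - q)) / 2\<bar> \<le> (c + d) / 2"
  using assms by (simp add: abs_le_iff)

theorem theorem2:
  fixes R L C Vdc T :: real and x xp :: "real \<Rightarrow> real^2"
  assumes "R > 0" "L > 0" "C > 0" "Vdc > 0" "T > 0"
    and sol: "is_switched_solution R L C Vdc T x"
    and psol: "is_switched_solution R L C Vdc T xp"
    and per: "\<forall>t\<ge>0. xp (t + T) = xp t"
  shows "has_average (\<lambda>t. x t $ 2) ((xp 0 $ 2 + xp (T / 2) $ 2) / 2)
       \<and> (xp 0 $ 2 + xp (T / 2) $ 2) / 2 = Vdc / 2
       \<and> has_average (\<lambda>t. x t $ 1) (2 * C / T * (Vdc - 2 * xp 0 $ 2))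
       \<and> \<bar>2 * C / T * (Vdc - 2 * xp 0 $ 2) - Vdc / (2 * R)\<bar>
           \<le> T / (2 * R * C) * (SUP t\<in>{0..T/2}. \<bar>xp t $ 1\<bar>)"
proof -
  note pos = assms(1,2,3,5)
  have R: "R > 0" and L: "L > 0" and C: "C > 0" and T: "T > 0" using assms by auto
  have cx: "continuous_on {0..} x" by (rule conjunct1[OF sol[unfolded is_switched_solution_def]])
  have cxp: "continuous_on {0..} xp" by (rule conjunct1[OF psol[unfolded is_switched_solution_def]])
  have cx1: "continuous_on {0..} (\<lambda>t. x t $ 1)" and cx2: "continuous_on {0..} (\<lambda>t. x t $ 2)"
    using cx by (auto intro: continuous_on_component)
  have cp1: "continuous_on {0..} (\<lambda>t. xp t $ 1)" and cp2: "continuous_on {0..} (\<lambda>t. xp t $ 2)"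
    using cxp by (auto intro: continuous_on_component)
  have perk: "xp (t + T) $ k = xp t $ k" if "t \<ge> 0" for t k using per that by simp
  have perh: "xp (t + T + T/2) $ k = xp (t + T/2) $ k" if "t \<ge> 0" for t k
  proof -
    have "t + T + T/2 = (t + T/2) + T" by simp
    then show ?thesis using perk[of "t + T/2" k] that T by simp
  qed
  have hs: "hom R L C T (\<lambda>t. xp t $ 1 - xp (t + T/2) $ 1) (\<lambda>t. xp t $ 2 + xp (t + T/2) $ 2 - Vdc)"
    by (rule hom_sym[OF L C psol])
  note dec = decay[OF pos hs]
  have S1: "xp (t + T/2) $ 1 = xp t $ 1" if t: "t \<ge> 0" for t
  proof -
    have "(\<lambda>t. xp t $ 1 - xp (t + T/2) $ 1) t = 0"
    proof (rule periodic_zero[OF T _ _ t])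
      show "\<forall>t\<ge>0. (\<lambda>t. xp t $ 1 - xp (t + T/2) $ 1) (t + T) = (\<lambda>t. xp t $ 1 - xp (t + T/2) $ 1) t"
        using perk perh by simp
      show "\<exists>t0. \<forall>t\<ge>t0. \<bar>(\<lambda>t. xp t $ 1 - xp (t + T/2) $ 1) t\<bar> \<le> e" if "e > 0" for e
        using dec[OF that] by auto
    qed
    then show ?thesis by simp
  qed
  have S2: "xp (t + T/2) $ 2 = Vdc - xp t $ 2" if t: "t \<ge> 0" for t
  proof -
    have "(\<lambda>t. xp t $ 2 + xp (t + T/2) $ 2 - Vdc) t = 0"
    proof (rule periodic_zero[OF T _ _ t])
      show "\<forall>t\<ge>0. (\<lambda>t. xp t $ 2 + xp (t + T/2) $ 2 - Vdc) (t + T) = (\<lambda>t. xp t $ 2 + xp (t + T/2) $ 2 - Vdc) t"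
        using perk perh by simp
      show "\<exists>t0. \<forall>t\<ge>t0. \<bar>(\<lambda>t. xp t $ 2 + xp (t + T/2) $ 2 - Vdc) t\<bar> \<le> e" if "e > 0" for e
        using dec[OF that] by auto
    qed
    then show ?thesis by simp
  qed
  have S1h: "xp (T/2) $ 1 = xp 0 $ 1" using S1[of 0] by simp
  have S2h: "xp (T/2) $ 2 = Vdc - xp 0 $ 2" using S2[of 0] by simp
  have claim2: "(xp 0 $ 2 + xp (T / 2) $ 2) / 2 = Vdc / 2" using S2h by simp
  define I1 where "I1 = integral {0..T/2} (\<lambda>t. xp t $ 1)"
  define V1 where "V1 = integral {0..T/2} (\<lambda>t. xp t $ 2)"
  have I1h: "((\<lambda>t. xp t $ 1) has_integral I1) {0..T/2}"
    unfolding I1_def by (rule integrable_integral, rule int_cont[OF cp1]) simp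
  have V1h: "((\<lambda>t. xp t $ 2) has_integral V1) {0..T/2}"
    unfolding V1_def by (rule integrable_integral, rule int_cont[OF cp2]) simp
  have I1eq: "I1 = C * (xp (T/2) $ 2 - xp 0 $ 2)"
  proof -
    have "((\<lambda>t. C * (sg 0 * xp t $ 1 / C)) has_integral C * (xp (T/2) $ 2 - xp 0 $ 2)) {0..T/2}"
      by (rule has_integral_mult_right[OF ftc_v[OF psol T]])
    moreover have "(\<lambda>t. C * (sg 0 * xp t $ 1 / C)) = (\<lambda>t. xp t $ 1)" using C by (auto simp: fun_eq_iff sg_def)
    ultimately show ?thesis using I1h has_integral_unique by metis
  qed
  have RIV: "R * I1 + V1 = Vdc * T / 2"
  proof -
    have h1: "((\<lambda>t. (- R / L) * xp t $ 1) has_integral (- R / L) * I1) {0..T/2}"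
      by (rule has_integral_mult_right[OF I1h])
    have h2: "((\<lambda>t. (1 / L) * xp t $ 2) has_integral (1 / L) * V1) {0..T/2}"
      by (rule has_integral_mult_right[OF V1h])
    have h3: "((\<lambda>t. Vdc / L) has_integral Henstock_Kurzweil_Integration.content {0..T/2} *\<^sub>R (Vdc / L)) {0..T/2}"
      by (rule has_integral_const_real)
    have A: "((\<lambda>t. (- R / L) * xp t $ 1 - (1 / L) * xp t $ 2 + Vdc / L) has_integral
        ((- R / L) * I1 - (1 / L) * V1 + Henstock_Kurzweil_Integration.content {0..T/2} *\<^sub>R (Vdc / L))) {0..T/2}"
      by (intro has_integral_add has_integral_diff h1 h2 h3)
    have B: "((\<lambda>t. (- R / L) * xp t $ 1 - (1 / L) * xp t $ 2 + Vdc / L) has_integral 0) {0..T/2}"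
    proof -
      have f: "(\<lambda>t. - R / L * xp t $ 1 - sg 0 * xp t $ 2 / L + (if even (0::nat) then Vdc / L else 0))
          = (\<lambda>t. (- R / L) * xp t $ 1 - (1 / L) * xp t $ 2 + Vdc / L)" by (auto simp: fun_eq_iff sg_def)
      show ?thesis using ftc_i[OF psol T] unfolding f S1h by simp
    qed
    have "(- R / L) * I1 - (1 / L) * V1 + Henstock_Kurzweil_Integration.content {0..T/2} *\<^sub>R (Vdc / L) = 0"
      using has_integral_unique[OF A B] .
    then have "(- R / L) * I1 - (1 / L) * V1 + T / 2 * (Vdc / L) = 0" using T by (simp add: content_real)
    then have "L * (R * I1 + V1) = L * (Vdc * T / 2)" using L by (simp add: field_simps)
    then show ?thesis using L by simp
  qed
  have split: "integral {0..T} g = integral {0..T/2} g + integral {0..T/2} (\<lambda>t. g (t + T/2))"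
    if cg: "continuous_on {0..} g" for g :: "real \<Rightarrow> real"
  proof -
    have "integral {0..T} g = integral {0..T/2} g + integral {T/2..T} g"
      using Henstock_Kurzweil_Integration.integral_combine[where a=0 and c="T/2" and b=T and f=g]
        int_cont[OF cg, where a=0 and b=T] T by auto
    moreover have "integral {0..T/2} (g \<circ> (+) (T/2)) = integral {0 + T/2 .. T/2 + T/2} g"
      by (rule integral_shift_Icc_real)
    ultimately show ?thesis by (simp add: o_def add.commute)
  qed
  have intI: "integral {0..T} (\<lambda>t. xp t $ 1) = 2 * I1"
  proof -
    have "integral {0..T/2} (\<lambda>t. xp (t + T/2) $ 1) = integral {0..T/2} (\<lambda>t. xp t $ 1)"
      by (rule integral_cong) (simp add: S1)
    then show ?thesis using split[OF cp1] by (simp add: I1_def)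
  qed
  have intV: "integral {0..T} (\<lambda>t. xp t $ 2) = Vdc * T / 2"
  proof -
    have "integral {0..T/2} (\<lambda>t. xp (t + T/2) $ 2) = integral {0..T/2} (\<lambda>t. Vdc - xp t $ 2)"
      by (rule integral_cong) (simp add: S2)
    also have "\<dots> = Henstock_Kurzweil_Integration.content {0..T/2} *\<^sub>R Vdc - V1"
      using has_integral_diff[OF has_integral_const_real V1h] by (rule integral_unique)
    also have "\<dots> = T / 2 * Vdc - V1" using T by (simp add: content_real)
    finally show ?thesis using split[OF cp2] by (simp add: V1_def[symmetric] algebra_simps)
  qed
  have avp1: "has_average (\<lambda>t. xp t $ 1) (2 * C / T * (Vdc - 2 * xp 0 $ 2))"
  proof -
    have "has_average (\<lambda>t. xp t $ 1) (integral {0..T} (\<lambda>t. xp t $ 1) / T)"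
      by (rule avg_periodic[OF T cp1]) (simp add: perk)
    moreover have "integral {0..T} (\<lambda>t. xp t $ 1) / T = 2 * C / T * (Vdc - 2 * xp 0 $ 2)"
      unfolding intI I1eq S2h by (simp add: field_simps)
    ultimately show ?thesis by simp
  qed
  have avp2: "has_average (\<lambda>t. xp t $ 2) ((xp 0 $ 2 + xp (T / 2) $ 2) / 2)"
  proof -
    have "has_average (\<lambda>t. xp t $ 2) (integral {0..T} (\<lambda>t. xp t $ 2) / T)"
      by (rule avg_periodic[OF T cp2]) (simp add: perk)
    moreover have "integral {0..T} (\<lambda>t. xp t $ 2) / T = (xp 0 $ 2 + xp (T / 2) $ 2) / 2"
      unfolding intV claim2 using T by simp
    ultimately show ?thesis by simp
  qed
  note dec2 = decay[OF pos hom_diff[OF L C sol psol]]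
  have av1: "has_average (\<lambda>t. x t $ 1) (2 * C / T * (Vdc - 2 * xp 0 $ 2))"
  proof -
    have "has_average (\<lambda>t. xp t $ 1 + (x t $ 1 - xp t $ 1)) (2 * C / T * (Vdc - 2 * xp 0 $ 2))"
    proof (rule avg_perturb[OF avp1 cp1])
      show "continuous_on {0..} (\<lambda>t. x t $ 1 - xp t $ 1)" using cx1 cp1 by (intro continuous_on_diff)
      show "\<exists>t0. \<forall>t\<ge>t0. \<bar>x t $ 1 - xp t $ 1\<bar> \<le> e" if "e > 0" for e using dec2[OF that] by auto
    qed
    then show ?thesis by simp
  qed
  have av2: "has_average (\<lambda>t. x t $ 2) ((xp 0 $ 2 + xp (T / 2) $ 2) / 2)"
  proof -
    have "has_average (\<lambda>t. xp t $ 2 + (x t $ 2 - xp t $ 2)) ((xp 0 $ 2 + xp (T / 2) $ 2) / 2)"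
    proof (rule avg_perturb[OF avp2 cp2])
      show "continuous_on {0..} (\<lambda>t. x t $ 2 - xp t $ 2)" using cx2 cp2 by (intro continuous_on_diff)
      show "\<exists>t0. \<forall>t\<ge>t0. \<bar>x t $ 2 - xp t $ 2\<bar> \<le> e" if "e > 0" for e using dec2[OF that] by auto
    qed
    then show ?thesis by simp
  qed
  define M where "M = (SUP t\<in>{0..T/2}. \<bar>xp t $ 1\<bar>)"
  have bdd: "bdd_above ((\<lambda>t. \<bar>xp t $ 1\<bar>) ` {0..T/2})"
  proof -
    have "compact ((\<lambda>t. \<bar>xp t $ 1\<bar>) ` {0..T/2})"
    proof (rule compact_continuous_image)
      have "continuous_on {0..T/2} xp" by (rule continuous_on_subset[OF cxp]) auto
      then show "continuous_on {0..T/2} (\<lambda>t. \<bar>xp t $ 1\<bar>)" by (intro continuous_intros)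
    qed auto
    then show ?thesis by (intro bounded_imp_bdd_above compact_imp_bounded)
  qed
  have Mb: "\<bar>xp t $ 1\<bar> \<le> M" if "t \<in> {0..T/2}" for t
    unfolding M_def using bdd that by (rule cSUP_upper2) simp
  have M0: "M \<ge> 0" using Mb[of 0] T by force
  have lip: "\<bar>xp b $ 2 - xp a $ 2\<bar> \<le> M / C * (b - a)" if ab: "0 \<le> a" "a \<le> b" "b \<le> T/2" for a b
  proof -
    have sub: "{a..b} \<subseteq> J T 0" using ab by (auto simp: J0)
    have d: "((\<lambda>t. xp t $ 2) has_real_derivative (xp t $ 1 / C)) (at t within {a..b})" if "t \<in> {a..b}" for t
      using DERIV_subset[OF sw_deriv(2)[OF psol, of t 0] sub] that sub by (auto simp: sg_def)
    have bd: "\<bar>xp t $ 1 / C\<bar> \<le> M / C" if "t \<in> {a..b}" for t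
      using Mb[of t] that ab C by (auto simp: abs_divide divide_right_mono)
    have "(\<lambda>t. xp t $ 2 - M / C * t) b \<le> (\<lambda>t. xp t $ 2 - M / C * t) a"
    proof (rule decr_interval[where g="\<lambda>t. xp t $ 2 - M / C * t" and g'="\<lambda>t. xp t $ 1 / C - M / C * 1"])
      show "a \<le> b" by fact
      show "((\<lambda>t. xp t $ 2 - M / C * t) has_real_derivative xp t $ 1 / C - M / C * 1) (at t within {a..b})"
        if "t \<in> {a..b}" for t using d[OF that] by (intro DERIV_diff DERIV_cmult DERIV_ident)
      show "xp t $ 1 / C - M / C * 1 \<le> 0" if "t \<in> {a..b}" for t using bd[OF that, unfolded abs_le_iff] by linarith
    qed
    moreover have "(\<lambda>t. - xp t $ 2 - M / C * t) b \<le> (\<lambda>t. - xp t $ 2 - M / C * t) a"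
    proof (rule decr_interval[where g="\<lambda>t. - xp t $ 2 - M / C * t" and g'="\<lambda>t. - (xp t $ 1 / C) - M / C * 1"])
      show "a \<le> b" by fact
      show "((\<lambda>t. - xp t $ 2 - M / C * t) has_real_derivative - (xp t $ 1 / C) - M / C * 1) (at t within {a..b})"
        if "t \<in> {a..b}" for t using d[OF that] by (intro DERIV_diff DERIV_minus DERIV_cmult DERIV_ident)
      show "- (xp t $ 1 / C) - M / C * 1 \<le> 0" if "t \<in> {a..b}" for t using bd[OF that, unfolded abs_le_iff] by linarith
    qed
    ultimately show ?thesis by (simp add: algebra_simps abs_le_iff diff_divide_distrib)
  qed
  have mid: "\<bar>Vdc / 2 - xp t $ 2\<bar> \<le> M * T / (4 * C)" if t: "t \<in> {0..T/2}" for t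
  proof -
    have a: "\<bar>xp t $ 2 - xp 0 $ 2\<bar> \<le> M / C * (t - 0)" using lip[of 0 t] t by auto
    have b: "\<bar>xp (T/2) $ 2 - xp t $ 2\<bar> \<le> M / C * (T/2 - t)" using lip[of t "T/2"] t by auto
    have e: "Vdc / 2 - xp t $ 2 = ((xp 0 $ 2 - xp t $ 2) + (xp (T/2) $ 2 - xp t $ 2)) / 2" using S2h by simp
    have "\<bar>Vdc / 2 - xp t $ 2\<bar> \<le> (M / C * (t - 0) + M / C * (T/2 - t)) / 2"
      unfolding e by (rule mid_aux[OF a b])
    also have "\<dots> = M * T / (4 * C)" using C by (simp add: field_simps)
    finally show ?thesis .
  qed
  define W where "W = integral {0..T/2} (\<lambda>t. Vdc / 2 - xp t $ 2)"
  have Weq: "W = T / 2 * (Vdc / 2) - V1"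
  proof -
    have "W = Henstock_Kurzweil_Integration.content {0..T/2} *\<^sub>R (Vdc / 2) - V1"
      unfolding W_def using has_integral_diff[OF has_integral_const_real V1h] by (rule integral_unique)
    then show ?thesis using T by (simp add: content_real)
  qed
  have Wb: "\<bar>W\<bar> \<le> M * T / (4 * C) * (T/2 - 0)"
  proof -
    have "continuous_on {0..T/2} (\<lambda>t. Vdc / 2 - xp t $ 2)"
      by (intro continuous_intros continuous_on_subset[OF cp2]) auto
    then show ?thesis unfolding W_def
      using integral_bound[where a=0 and b="T/2" and f="\<lambda>t. Vdc / 2 - xp t $ 2" and B="M * T / (4 * C)"] mid T by auto
  qed
  have eqL: "2 * C / T * (Vdc - 2 * xp 0 $ 2) - Vdc / (2 * R) = 2 * W / (R * T)"
  proof -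
    have "C * (Vdc - 2 * xp 0 $ 2) = I1" using I1eq S2h by simp
    moreover have "I1 = (Vdc * T / 2 - V1) / R" using RIV R by (simp add: field_simps)
    moreover have "2 * C / T * (Vdc - 2 * xp 0 $ 2) = 2 * (C * (Vdc - 2 * xp 0 $ 2)) / T" by simp
    ultimately have "2 * C / T * (Vdc - 2 * xp 0 $ 2) = 2 * ((Vdc * T / 2 - V1) / R) / T" by simp
    moreover have "2 * ((Vdc * T / 2 - V1) / R) / T - Vdc / (2 * R) = 2 * (T / 2 * (Vdc / 2) - V1) / (R * T)"
      using R T by (simp add: field_simps)
    ultimately show ?thesis unfolding Weq by simp
  qed
  have ineq: "\<bar>2 * C / T * (Vdc - 2 * xp 0 $ 2) - Vdc / (2 * R)\<bar> \<le> T / (2 * R * C) * M"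
  proof -
    have "\<bar>2 * W / (R * T)\<bar> = 2 * \<bar>W\<bar> / (R * T)" using R T by (simp add: abs_divide abs_mult)
    also have "\<dots> \<le> 2 * (M * T / (4 * C) * (T/2 - 0)) / (R * T)"
      using Wb R T by (intro divide_right_mono mult_left_mono) auto
    also have "\<dots> = T / (4 * R * C) * M" using R T C by (simp add: field_simps)
    also have "\<dots> \<le> T / (2 * R * C) * M"
      using R T C M0 by (intro mult_right_mono) (auto simp: field_simps)
    finally show ?thesis unfolding eqL .
  qed
  show ?thesis using av1 av2 claim2 ineq unfolding M_def by (intro conjI)
qed


end
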